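(* Let $n\geqslant 2$. For $\alpha\in\mathbf{I}\mathbb{N}_{\infty}^n$ let $\sigma_\alpha\in H(\mathbb{I})$ be the unique unit such that $\alpha=\sigma_\alpha\varepsilon$ for some idempotent $\varepsilon$ of $\mathbf{I}\mathbb{N}_{\infty}^n$. Then $\alpha\,\mathfrak{C}_{\mathbf{mg}}\,\beta$ if and only if $\sigma_\alpha=\sigma_\beta$; the quotient semigroup $\mathbf{I}\mathbb{N}_{\infty}^n/\mathfrak{C}_{\mathbf{mg}}$ is isomorphic to the symmetric group $\mathscr{S}_n$, and the natural homomorphism $\mathbf{I}\mathbb{N}_{\infty}^n\to\mathbf{I}\mathbb{N}_{\infty}^n/\mathfrak{C}_{\mathbf{mg}}$ corresponds to the map $\alpha\mapsto\sigma_\alpha$ onto $H(\mathbb{I})\cong\mathscr{S}_n$.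
   Context: $\mathbb{N}=\{1,2,3,\ldots\}$, $n\geqslant 2$, and $\mathbb{N}^n$ carries the Euclidean metric $d$. A partial isometry of $\mathbb{N}^n$ is an injective partial map $\alpha\colon\mathbb{N}^n\rightharpoonup\mathbb{N}^n$ with $d((\mathbf{x})\alpha,(\mathbf{y})\alpha)=d(\mathbf{x},\mathbf{y})$ for all $\mathbf{x},\mathbf{y}\in\operatorname{dom}\alpha$; it is cofinite if $\mathbb{N}^n\setminus\operatorname{dom}\alpha$ and $\mathbb{N}^n\setminus\operatorname{ran}\alpha$ are finite. $\mathbf{I}\mathbb{N}_{\infty}^n$ is the monoid of all partial cofinite isometries of $\mathbb{N}^n$ under composition of partial maps written on the right. Its identity is the identity map $\mathbb{I}$ of $\mathbb{N}^n$ and $H(\mathbb{I})$ is its group of units. $\mathscr{S}_n$ is the symmetric group on $\{1,\ldots,n\}$. For an inverse semigroup $S$, the least group congruence $\mathfrak{C}_{\mathbf{mg}}$ is defined by $a\,\mathfrak{C}_{\mathbf{mg}}\,b$ iff $ae=be$ for some idempotent $e\in S$. *)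

theory Defs
  imports Complex_Main "HOL-Algebra.Sym_Groups"
begin

(* Points of N^n (N = {1,2,...}) are encoded as functions nat => nat whose
   coordinates indexed by {1..n} are >= 1 and which vanish outside {1..n}. *)
definition INpts :: "nat \<Rightarrow> (nat \<Rightarrow> nat) set" where
  "INpts n = {x. (\<forall>i\<in>{1..n}. 1 \<le> x i) \<and> (\<forall>i. i \<notin> {1..n} \<longrightarrow> x i = 0)}"

definition INdist :: "nat \<Rightarrow> (nat \<Rightarrow> nat) \<Rightarrow> (nat \<Rightarrow> nat) \<Rightarrow> real" where
  "INdist n x y = sqrt (\<Sum>i\<in>{1..n}. (real (x i) - real (y i))^2)"

definition INinf :: "nat \<Rightarrow> ((nat \<Rightarrow> nat) \<rightharpoonup> (nat \<Rightarrow> nat)) set" where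
  "INinf n = {\<alpha>. dom \<alpha> \<subseteq> INpts n \<and> ran \<alpha> \<subseteq> INpts n \<and> inj_on \<alpha> (dom \<alpha>)
      \<and> (\<forall>x\<in>dom \<alpha>. \<forall>y\<in>dom \<alpha>. INdist n (the (\<alpha> x)) (the (\<alpha> y)) = INdist n x y)
      \<and> finite (INpts n - dom \<alpha>) \<and> finite (INpts n - ran \<alpha>)}"

(* composition of partial maps written on the right: x(\<alpha>\<beta>) = (x\<alpha>)\<beta> *)
definition INmul :: "('a \<rightharpoonup> 'a) \<Rightarrow> ('a \<rightharpoonup> 'a) \<Rightarrow> ('a \<rightharpoonup> 'a)" where
  "INmul \<alpha> \<beta> = \<beta> \<circ>\<^sub>m \<alpha>"

definition INid :: "nat \<Rightarrow> ((nat \<Rightarrow> nat) \<rightharpoonup> (nat \<Rightarrow> nat))" where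
  "INid n = (\<lambda>x. if x \<in> INpts n then Some x else None)"

definition INidem :: "nat \<Rightarrow> ((nat \<Rightarrow> nat) \<rightharpoonup> (nat \<Rightarrow> nat)) set" where
  "INidem n = {e \<in> INinf n. INmul e e = e}"

definition INunits :: "nat \<Rightarrow> ((nat \<Rightarrow> nat) \<rightharpoonup> (nat \<Rightarrow> nat)) set" where
  "INunits n = {u \<in> INinf n. \<exists>v\<in>INinf n. INmul u v = INid n \<and> INmul v u = INid n}"

definition INunits_grp :: "nat \<Rightarrow> ((nat \<Rightarrow> nat) \<rightharpoonup> (nat \<Rightarrow> nat)) monoid" where
  "INunits_grp n = \<lparr>carrier = INunits n, mult = INmul, one = INid n\<rparr>"

definition Cmg :: "nat \<Rightarrow> (((nat \<Rightarrow> nat) \<rightharpoonup> (nat \<Rightarrow> nat)) \<times> ((nat \<Rightarrow> nat) \<rightharpoonup> (nat \<Rightarrow> nat))) set" where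
  "Cmg n = {(a, b). a \<in> INinf n \<and> b \<in> INinf n \<and> (\<exists>e\<in>INidem n. INmul a e = INmul b e)}"

definition INsigma :: "nat \<Rightarrow> ((nat \<Rightarrow> nat) \<rightharpoonup> (nat \<Rightarrow> nat)) \<Rightarrow> ((nat \<Rightarrow> nat) \<rightharpoonup> (nat \<Rightarrow> nat))" where
  "INsigma n \<alpha> = (THE u. u \<in> INunits n \<and> (\<exists>e\<in>INidem n. \<alpha> = INmul u e))"

definition INquot :: "nat \<Rightarrow> ((nat \<Rightarrow> nat) \<rightharpoonup> (nat \<Rightarrow> nat)) set monoid" where
  "INquot n = \<lparr>carrier = INinf n // Cmg n,
     mult = (\<lambda>X Y. Cmg n `` {INmul (SOME x. x \<in> X) (SOME y. y \<in> Y)}),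
     one = Cmg n `` {INid n}\<rparr>"

end

theory Submission
  imports Defs
begin

definition Rm :: "(nat \<Rightarrow> nat) \<Rightarrow> (nat \<Rightarrow> nat) set \<Rightarrow> ((nat \<Rightarrow> nat) \<rightharpoonup> (nat \<Rightarrow> nat))" where
  "Rm p D = (\<lambda>x. if x \<in> D then Some (x \<circ> p) else None)"

definition sqd :: "nat \<Rightarrow> (nat \<Rightarrow> nat) \<Rightarrow> (nat \<Rightarrow> nat) \<Rightarrow> real" where
  "sqd n x y = (\<Sum>i\<in>{1..n}. (real (x i) - real (y i))^2)"

lemma INdist_sqd: "INdist n x y = sqrt (sqd n x y)"
  by (simp add: INdist_def sqd_def)

lemma sqd_nonneg: "sqd n x y \<ge> 0"
  unfolding sqd_def by (intro sum_nonneg) auto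

lemma INdist_eq_iff: "INdist n a b = INdist n c d \<longleftrightarrow> sqd n a b = sqd n c d"
  by (simp add: INdist_sqd)

lemma INpts_iff: "x \<in> INpts n \<longleftrightarrow> (\<forall>i. (1 \<le> i \<and> i \<le> n \<longrightarrow> 1 \<le> x i) \<and> (\<not>(1 \<le> i \<and> i \<le> n) \<longrightarrow> x i = 0))"
  unfolding INpts_def by auto

lemma perm_pt:
  assumes "p permutes {1..n}" "x \<in> INpts n" shows "x \<circ> p \<in> INpts n"
proof -
  have a: "p i \<in> {1..n} \<longleftrightarrow> i \<in> {1..n}" for i using assms(1) by (rule permutes_in_image)
  have b: "i \<notin> {1..n} \<Longrightarrow> p i = i" for i using assms(1) by (simp add: permutes_not_in)
  show ?thesis using assms(2) a b unfolding INpts_def by auto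
qed

lemma comp_perm_inj:
  assumes "p permutes S" "x \<circ> p = y \<circ> p" shows "x = y"
proof -
  have "x \<circ> p \<circ> Hilbert_Choice.inv p = y \<circ> p \<circ> Hilbert_Choice.inv p" using assms by simp
  thus ?thesis using permutes_inv_o(1)[OF assms(1)] by (simp add: o_assoc[symmetric])
qed

lemma comp_perm_inv:
  assumes "p permutes S" shows "y \<circ> Hilbert_Choice.inv p \<circ> p = y"
  using permutes_inv_o(2)[OF assms] by (simp add: o_assoc[symmetric])

lemma sqd_perm:
  assumes "p permutes {1..n}" shows "sqd n (x \<circ> p) (y \<circ> p) = sqd n x y"
  unfolding sqd_def using sum.permute[OF assms, of "\<lambda>i. (real (x i) - real (y i))^2"]
  by (simp add: o_def)

lemma bound_ex:
  fixes F :: "(nat \<Rightarrow> nat) set" and n :: nat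
  assumes "finite F" shows "\<exists>K. \<forall>x\<in>F. \<forall>i\<in>{1..n}. x i \<le> K"
proof -
  have "finite (\<Union>x\<in>F. x ` {1..n})" using assms by auto
  then obtain K where "\<forall>v\<in>(\<Union>x\<in>F. x ` {1..n}). v \<le> K"
    using finite_nat_set_iff_bounded_le by blast
  thus ?thesis by auto
qed

lemma dom_Rm[simp]: "dom (Rm p D) = D"
  unfolding Rm_def dom_def by auto

lemma ran_Rm: "ran (Rm p D) = (\<lambda>x. x \<circ> p) ` D"
  unfolding Rm_def ran_def by (auto split: if_splits)

lemma Rm_in:
  assumes p: "p permutes {1..n}" and D: "D \<subseteq> INpts n" "finite (INpts n - D)"
  shows "Rm p D \<in> INinf n"
proof -
  have ip: "Hilbert_Choice.inv p permutes {1..n}" using p by (rule permutes_inv)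
  have "INpts n - (\<lambda>x. x \<circ> p) ` D \<subseteq> (\<lambda>x. x \<circ> p) ` (INpts n - D)"
  proof
    fix y assume y: "y \<in> INpts n - (\<lambda>x. x \<circ> p) ` D"
    have e: "y = (y \<circ> Hilbert_Choice.inv p) \<circ> p" using comp_perm_inv[OF p, of y] by (rule sym)
    have "y \<circ> Hilbert_Choice.inv p \<in> INpts n" using perm_pt[OF ip] y by auto
    moreover have "y \<circ> Hilbert_Choice.inv p \<notin> D" using y e by (metis DiffD2 image_eqI)
    ultimately show "y \<in> (\<lambda>x. x \<circ> p) ` (INpts n - D)" using e by blast
  qed
  hence fr: "finite (INpts n - (\<lambda>x. x \<circ> p) ` D)" using D(2) finite_subset by blast
  have r: "ran (Rm p D) \<subseteq> INpts n" using D(1) perm_pt[OF p] by (auto simp: ran_Rm)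
  have i: "inj_on (Rm p D) D" using comp_perm_inj[OF p] by (auto simp: inj_on_def Rm_def)
  have d: "\<forall>x\<in>D. \<forall>y\<in>D. INdist n (the (Rm p D x)) (the (Rm p D y)) = INdist n x y"
    by (auto simp: Rm_def INdist_eq_iff sqd_perm[OF p])
  show ?thesis unfolding INinf_def using D r i d fr by (simp add: ran_Rm)
qed

definition sqi :: "nat \<Rightarrow> (nat \<Rightarrow> nat) \<Rightarrow> (nat \<Rightarrow> nat) \<Rightarrow> int" where
  "sqi n x y = (\<Sum>i\<in>{1..n}. (int (x i) - int (y i))^2)"

lemma sqd_sqi: "sqd n x y = of_int (sqi n x y)"
  unfolding sqd_def sqi_def by simp

lemma sqi_diff_single:
  assumes "j \<in> {1..n}" "\<forall>k\<in>{1..n}. k \<noteq> j \<longrightarrow> y k = z k"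
  shows "sqi n x y - sqi n x z = (int (x j) - int (y j))^2 - (int (x j) - int (z j))^2"
proof -
  have "sqi n x y - sqi n x z = (\<Sum>k\<in>{1..n}. (int (x k) - int (y k))^2 - (int (x k) - int (z k))^2)"
    unfolding sqi_def by (simp add: sum_subtractf)
  also have "\<dots> = (\<Sum>k\<in>{1..n}. if k = j then (int (x j) - int (y j))^2 - (int (x j) - int (z j))^2 else 0)"
    using assms(2) by (intro sum.cong) auto
  also have "\<dots> = (int (x j) - int (y j))^2 - (int (x j) - int (z j))^2"
    using assms(1) by (simp add: sum.delta)
  finally show ?thesis .
qed

lemma int_sq_one:
  fixes h :: "nat \<Rightarrow> int"
  assumes "finite S" "(\<Sum>k\<in>S. (h k)^2) = 1"
  shows "\<exists>j\<in>S. (h j = 1 \<or> h j = -1) \<and> (\<forall>k\<in>S. k \<noteq> j \<longrightarrow> h k = 0)"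
proof -
  obtain j where j: "j \<in> S" "h j \<noteq> 0"
  proof (rule ccontr)
    assume "\<not> thesis"
    with that have "\<forall>k\<in>S. h k = 0" by blast
    hence "(\<Sum>k\<in>S. (h k)^2) = 0" by simp
    with assms(2) show False by simp
  qed
  have split: "(\<Sum>k\<in>S. (h k)^2) = (h j)^2 + (\<Sum>k\<in>S-{j}. (h k)^2)"
    using assms(1) j(1) by (simp add: sum.remove)
  have nn: "(\<Sum>k\<in>S-{j}. (h k)^2) \<ge> 0" by (intro sum_nonneg) auto
  have a1: "\<bar>h j\<bar> \<ge> 1" using j(2) by linarith
  have "(h j)^2 = \<bar>h j\<bar>^2" by simp
  hence "(h j)^2 \<ge> 1" using one_le_power[OF a1, of 2] by simp
  hence hj: "(h j)^2 = 1" and rest: "(\<Sum>k\<in>S-{j}. (h k)^2) = 0" using split assms(2) nn by linarith+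
  have "\<forall>k\<in>S-{j}. (h k)^2 = 0" using rest assms(1) by (subst sum_nonneg_eq_0_iff[symmetric]) auto
  thus ?thesis using hj j(1) by (auto simp: power2_eq_1_iff)
qed

lemma key:
  assumes n2: "n \<ge> 2" and al: "\<alpha> \<in> INinf n"
  shows "\<exists>p. p permutes {1..n} \<and> \<alpha> = Rm p (dom \<alpha>)"
proof -
  define D where "D = dom \<alpha>"
  define f where "f x = the (\<alpha> x)" for x
  have domsub: "D \<subseteq> INpts n" and ransub: "ran \<alpha> \<subseteq> INpts n"
    and iso: "\<And>x y. x \<in> D \<Longrightarrow> y \<in> D \<Longrightarrow> INdist n (f x) (f y) = INdist n x y"
    and fF: "finite (INpts n - D)" and fG: "finite (INpts n - ran \<alpha>)"
    using al unfolding INinf_def D_def f_def by auto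
  have fS: "x \<in> D \<Longrightarrow> \<alpha> x = Some (f x)" for x unfolding D_def f_def by auto
  have fP: "x \<in> D \<Longrightarrow> f x \<in> INpts n" for x using fS ransub by (auto simp: ran_def)
  have sq: "x \<in> D \<Longrightarrow> y \<in> D \<Longrightarrow> sqi n (f x) (f y) = sqi n x y" for x y
    using iso[of x y] by (simp add: INdist_eq_iff sqd_sqi)
  obtain K1 where K1: "\<forall>x\<in>INpts n - D. \<forall>i\<in>{1..n}. x i \<le> K1" using bound_ex[OF fF] by blast
  obtain K2 where K2: "\<forall>x\<in>INpts n - ran \<alpha>. \<forall>i\<in>{1..n}. x i \<le> K2" using bound_ex[OF fG] by blast
  define K where "K = max K1 K2"
  have inD: "y \<in> INpts n \<Longrightarrow> i \<in> {1..n} \<Longrightarrow> y i > K \<Longrightarrow> y \<in> D" for y i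
    using K1 unfolding K_def by force
  have inR: "y \<in> INpts n \<Longrightarrow> i \<in> {1..n} \<Longrightarrow> y i > K \<Longrightarrow> y \<in> ran \<alpha>" for y i
    using K2 unfolding K_def by force
  have ge1: "y \<in> INpts n \<Longrightarrow> i \<in> {1..n} \<Longrightarrow> y i \<ge> 1" for y i unfolding INpts_def by auto
  have out0: "y \<in> INpts n \<Longrightarrow> i \<notin> {1..n} \<Longrightarrow> y i = 0" for y i unfolding INpts_def by auto
  define cp where "cp L = (\<lambda>j. if j \<in> {1..n} then L else (0::nat))" for L
  have cpP: "L \<ge> 1 \<Longrightarrow> cp L \<in> INpts n" for L unfolding cp_def INpts_def by auto
  have cpupd: "L \<ge> 1 \<Longrightarrow> M \<ge> 1 \<Longrightarrow> i \<in> {1..n} \<Longrightarrow> (cp L)(i := M) \<in> INpts n" for L M i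
    unfolding cp_def INpts_def by auto
  have one_in: "1 \<in> {1..n}" using n2 by simp
  define a where "a = cp (K+1)"
  define ai where "ai i = a(i := K+2)" for i
  have aD: "a \<in> D" using inD[OF _ one_in, of a] cpP unfolding a_def cp_def using one_in by auto
  have aiD: "i \<in> {1..n} \<Longrightarrow> ai i \<in> D" for i
    using inD[of "ai i" i] cpupd[of "K+1" "K+2" i] unfolding ai_def a_def by auto
  define b where "b = f a"
  define g where "g i = f (ai i)" for i
  have sqai: "i \<in> {1..n} \<Longrightarrow> sqi n (ai i) a = 1" for i
  proof -
    assume i: "i \<in> {1..n}"
    have "sqi n (ai i) a - sqi n (ai i) (ai i) = (int (ai i i) - int (a i))^2 - (int (ai i i) - int (ai i i))^2"
      using i by (intro sqi_diff_single) (auto simp: ai_def)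
    moreover have "sqi n (ai i) (ai i) = 0" unfolding sqi_def by simp
    moreover have "ai i i = K + 2" "a i = K + 1" using i by (auto simp: ai_def a_def cp_def)
    ultimately show ?thesis by simp
  qed
  have gb: "\<exists>j\<in>{1..n}. (int (g i j) - int (b j) = 1 \<or> int (g i j) - int (b j) = -1)
      \<and> (\<forall>k\<in>{1..n}. k \<noteq> j \<longrightarrow> int (g i k) - int (b k) = 0)" if i: "i \<in> {1..n}" for i
  proof -
    have "sqi n (g i) b = 1" using sq[OF aiD[OF i] aD] sqai[OF i] unfolding g_def b_def by simp
    thus ?thesis unfolding sqi_def by (intro int_sq_one) auto
  qed
  define pp where "pp i = (SOME j. j \<in> {1..n} \<and> (int (g i j) - int (b j) = 1 \<or> int (g i j) - int (b j) = -1)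
      \<and> (\<forall>k\<in>{1..n}. k \<noteq> j \<longrightarrow> int (g i k) - int (b k) = 0))" for i
  define s where "s i = int (g i (pp i)) - int (b (pp i))" for i
  have ppP: "pp i \<in> {1..n}" "s i = 1 \<or> s i = -1" "\<And>k. k \<in> {1..n} \<Longrightarrow> k \<noteq> pp i \<Longrightarrow> g i k = b k"
    if i: "i \<in> {1..n}" for i
  proof -
    have "pp i \<in> {1..n} \<and> (int (g i (pp i)) - int (b (pp i)) = 1 \<or> int (g i (pp i)) - int (b (pp i)) = -1)
      \<and> (\<forall>k\<in>{1..n}. k \<noteq> pp i \<longrightarrow> int (g i k) - int (b k) = 0)"
      unfolding pp_def using someI_ex[OF gb[OF i, unfolded Bex_def]] by blast
    thus "pp i \<in> {1..n}" "s i = 1 \<or> s i = -1" "\<And>k. k \<in> {1..n} \<Longrightarrow> k \<noteq> pp i \<Longrightarrow> g i k = b k"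
      unfolding s_def by auto
  qed
  have lin: "int (f x (pp i)) = int (b (pp i)) + s i * (int (x i) - int K - 1)"
    if x: "x \<in> D" and i: "i \<in> {1..n}" for x i
  proof -
    have e1: "sqi n (f x) (g i) - sqi n (f x) b = (int (f x (pp i)) - int (g i (pp i)))^2 - (int (f x (pp i)) - int (b (pp i)))^2"
      using ppP[OF i] by (intro sqi_diff_single) auto
    have e2: "sqi n x (ai i) - sqi n x a = (int (x i) - int (ai i i))^2 - (int (x i) - int (a i))^2"
      using i by (intro sqi_diff_single) (auto simp: ai_def)
    have e3: "sqi n (f x) (g i) = sqi n x (ai i)" using sq[OF x aiD[OF i]] unfolding g_def .
    have e4: "sqi n (f x) b = sqi n x a" using sq[OF x aD] unfolding b_def .
    have v: "int (ai i i) = int K + 2" "int (a i) = int K + 1" using i by (auto simp: ai_def a_def cp_def)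
    have gs: "int (g i (pp i)) = int (b (pp i)) + s i" unfolding s_def by simp
    have e5: "sqi n x (ai i) - sqi n x a = (int (f x (pp i)) - int (g i (pp i)))^2 - (int (f x (pp i)) - int (b (pp i)))^2"
      using e1 e3 e4 by simp
    have eq: "(int (f x (pp i)) - (int (b (pp i)) + s i))^2 - (int (f x (pp i)) - int (b (pp i)))^2
        = (int (x i) - (int K + 2))^2 - (int (x i) - (int K + 1))^2"
      using e5 e2 unfolding v gs by simp
    show ?thesis using ppP(2)[OF i]
    proof
      assume "s i = 1" thus ?thesis using eq by (simp add: power2_eq_square algebra_simps)
    next
      assume "s i = -1" thus ?thesis using eq by (simp add: power2_eq_square algebra_simps)
    qed
  qed
  have ppinj: "inj_on pp {1..n}"
  proof (rule inj_onI, rule ccontr)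
    fix i i' assume i: "i \<in> {1..n}" and i': "i' \<in> {1..n}" and eq: "pp i = pp i'" and ne: "i \<noteq> i'"
    have "int (f (ai i) (pp i')) = int (b (pp i')) + s i' * (int (ai i i') - int K - 1)"
      using lin[OF aiD[OF i] i'] .
    moreover have "ai i i' = K + 1" using ne i' by (auto simp: ai_def a_def cp_def)
    ultimately have "int (g i (pp i)) = int (b (pp i))" using eq unfolding g_def by simp
    hence "s i = 0" unfolding s_def by simp
    thus False using ppP(2)[OF i] by simp
  qed
  have ppimg: "pp ` {1..n} = {1..n}"
    by (rule endo_inj_surj) (use ppP(1) ppinj in auto)
  define P where "P j = (if j \<in> {1..n} then pp j else j)" for j
  have Pp: "P permutes {1..n}"
  proof (rule bij_imp_permutes)
    have "bij_betw pp {1..n} {1..n}" using ppinj ppimg by (simp add: bij_betw_def)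
    thus "bij_betw P {1..n} {1..n}" by (rule bij_betw_cong[THEN iffD1, rotated]) (auto simp: P_def)
  qed (auto simp: P_def)
  have spos: "s i = 1" if i: "i \<in> {1..n}" for i
  proof (rule ccontr)
    assume "s i \<noteq> 1" hence sm: "s i = -1" using ppP(2)[OF i] by simp
    define L where "L = K + 1 + b (pp i)"
    have xD: "cp L \<in> D" using inD[of "cp L" i] cpP[of L] i unfolding L_def cp_def by auto
    have "int (f (cp L) (pp i)) = int (b (pp i)) + s i * (int (cp L i) - int K - 1)" by (rule lin[OF xD i])
    hence "int (f (cp L) (pp i)) = 0" using sm i unfolding L_def cp_def by simp
    moreover have "f (cp L) (pp i) \<ge> 1" using ge1[OF fP[OF xD] ppP(1)[OF i]] .
    ultimately show False by simp
  qed
  have fix_: "f x (pp i) = x i" if x: "x \<in> D" and i: "i \<in> {1..n}" for x i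
  proof -
    have l: "int (f y (pp i)) = int (b (pp i)) + (int (y i) - int K - 1)" if "y \<in> D" for y
      using lin[OF that i] spos[OF i] by simp
    obtain j where j: "j \<in> {1..n}" "j \<noteq> i"
    proof (cases "i = 1")
      case True thus ?thesis using that[of 2] n2 by auto
    next
      case False thus ?thesis using that[of 1] n2 by auto
    qed
    have c1: "int (b (pp i)) - int K - 1 \<ge> 0"
    proof -
      define z where "z = a(i := 1)"
      have zD: "z \<in> D" using inD[of z j] cpupd[of "K+1" 1 i] i j unfolding z_def a_def cp_def by auto
      have "f z (pp i) \<ge> 1" using ge1[OF fP[OF zD] ppP(1)[OF i]] .
      moreover have "int (f z (pp i)) = int (b (pp i)) + (1 - int K - 1)" using l[OF zD] by (simp add: z_def)
      ultimately show ?thesis by linarith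
    qed
    have c2: "int (b (pp i)) - int K - 1 \<le> 0"
    proof -
      have ppj: "pp j \<in> {1..n}" using ppP(1)[OF j(1)] .
      have ppj2: "pp j \<noteq> pp i"
      proof
        assume "pp j = pp i" hence "j = i" using inj_onD[OF ppinj _ j(1) i] by blast
        thus False using j(2) by simp
      qed
      define z where "z = a(pp i := 1)"
      have zR: "z \<in> ran \<alpha>" using inR[of z "pp j"] cpupd[of "K+1" 1 "pp i"] ppP(1)[OF i] ppj ppj2
        unfolding z_def a_def cp_def by auto
      then obtain y where "\<alpha> y = Some z" by (auto simp: ran_def)
      hence yD: "y \<in> D" and fy: "f y = z" unfolding D_def f_def by auto
      have "y i \<ge> 1" using ge1[OF _ i] domsub yD by auto
      moreover have "int (z (pp i)) = int (b (pp i)) + (int (y i) - int K - 1)" using l[OF yD] fy by simp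
      moreover have "z (pp i) = 1" unfolding z_def by simp
      ultimately show ?thesis by linarith
    qed
    show ?thesis using l[OF x] c1 c2 by linarith
  qed
  define Q where "Q = Hilbert_Choice.inv P"
  have Qp: "Q permutes {1..n}" unfolding Q_def by (rule permutes_inv[OF Pp])
  have "\<alpha> = Rm Q D"
  proof
    fix x show "\<alpha> x = Rm Q D x"
    proof (cases "x \<in> D")
      case False thus ?thesis unfolding Rm_def D_def by auto
    next
      case True
      have "f x = x \<circ> Q"
      proof
        fix j show "f x j = (x \<circ> Q) j"
        proof (cases "j \<in> {1..n}")
          case True
          have Qj: "Q j \<in> {1..n}" using permutes_in_image[OF Qp] True by simp
          have "P (Q j) = j" unfolding Q_def using permutes_inverses(1)[OF Pp] by simp
          hence "pp (Q j) = j" using Qj by (simp add: P_def)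
          thus ?thesis using fix_[OF \<open>x \<in> D\<close> Qj] by simp
        next
          case False
          have "Q j = j" using permutes_not_in[OF Qp False] .
          thus ?thesis using out0[OF fP[OF \<open>x \<in> D\<close>] False] out0[OF _ False, of x] domsub \<open>x \<in> D\<close> by auto
        qed
      qed
      thus ?thesis using fS[OF True] True unfolding Rm_def by simp
    qed
  qed
  thus ?thesis using Qp unfolding D_def by blast
qed

definition Pm :: "nat \<Rightarrow> ((nat \<Rightarrow> nat) \<rightharpoonup> (nat \<Rightarrow> nat)) \<Rightarrow> (nat \<Rightarrow> nat)" where
  "Pm n \<alpha> = (THE p. p permutes {1..n} \<and> \<alpha> = Rm p (dom \<alpha>))"

definition Cl :: "nat \<Rightarrow> (nat \<Rightarrow> nat) \<Rightarrow> ((nat \<Rightarrow> nat) \<rightharpoonup> (nat \<Rightarrow> nat)) set" where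
  "Cl n p = {\<beta> \<in> INinf n. Pm n \<beta> = p}"

lemma uniq:
  assumes n2: "n \<ge> 2" and p: "p permutes {1..n}" and q: "q permutes {1..n}"
    and D: "finite (INpts n - D)" and eq: "\<forall>x\<in>D. x \<circ> p = x \<circ> q"
  shows "p = q"
proof -
  obtain K where K: "\<forall>x\<in>INpts n - D. \<forall>i\<in>{1..n}. x i \<le> K" using bound_ex[OF D] by blast
  define z where "z = (\<lambda>j. if j \<in> {1..n} then K + j else 0)"
  have zP: "z \<in> INpts n" unfolding z_def INpts_def by auto
  have "z 1 > K" "1 \<in> {1..n}" using n2 by (auto simp: z_def)
  hence "z \<in> D" using K zP by force
  hence zz: "z \<circ> p = z \<circ> q" using eq by blast
  show ?thesis
  proof
    fix j show "p j = q j"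
    proof (cases "j \<in> {1..n}")
      case True
      hence "p j \<in> {1..n}" "q j \<in> {1..n}" using permutes_in_image[OF p] permutes_in_image[OF q] by auto
      moreover have "z (p j) = z (q j)" using zz by (metis comp_apply)
      ultimately show ?thesis by (simp add: z_def)
    next
      case False thus ?thesis using permutes_not_in[OF p] permutes_not_in[OF q] by simp
    qed
  qed
qed

lemma Pm_prop:
  assumes n2: "n \<ge> 2" and al: "\<alpha> \<in> INinf n"
  shows "Pm n \<alpha> permutes {1..n} \<and> \<alpha> = Rm (Pm n \<alpha>) (dom \<alpha>)"
proof -
  have fF: "finite (INpts n - dom \<alpha>)" using al unfolding INinf_def by auto
  have ex: "\<exists>!p. p permutes {1..n} \<and> \<alpha> = Rm p (dom \<alpha>)"
  proof -
    obtain p where p: "p permutes {1..n} \<and> \<alpha> = Rm p (dom \<alpha>)" using key[OF n2 al] by blast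
    moreover have "q = p" if q: "q permutes {1..n} \<and> \<alpha> = Rm q (dom \<alpha>)" for q
    proof (rule uniq[OF n2 _ _ fF])
      show "\<forall>x\<in>dom \<alpha>. x \<circ> q = x \<circ> p"
      proof
        fix x assume "x \<in> dom \<alpha>"
        hence "Rm q (dom \<alpha>) x = Rm p (dom \<alpha>) x" using p q by metis
        thus "x \<circ> q = x \<circ> p" using \<open>x \<in> dom \<alpha>\<close> unfolding Rm_def by simp
      qed
    qed (use p q in auto)
    ultimately show ?thesis by blast
  qed
  show ?thesis unfolding Pm_def using theI'[OF ex] .
qed

lemma Pm_Rm:
  assumes n2: "n \<ge> 2" and p: "p permutes {1..n}" and D: "D \<subseteq> INpts n" "finite (INpts n - D)"
  shows "Pm n (Rm p D) = p"
proof -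
  have i: "Rm p D \<in> INinf n" using Rm_in[OF p D] .
  have pr: "Pm n (Rm p D) permutes {1..n}" "Rm p D = Rm (Pm n (Rm p D)) D" using Pm_prop[OF n2 i] by auto
  show ?thesis
  proof (rule uniq[OF n2 pr(1) p D(2)])
    show "\<forall>x\<in>D. x \<circ> Pm n (Rm p D) = x \<circ> p"
    proof
      fix x assume x: "x \<in> D"
      have "Rm (Pm n (Rm p D)) D x = Rm p D x" using pr(2) by simp
      thus "x \<circ> Pm n (Rm p D) = x \<circ> p" using x unfolding Rm_def by simp
    qed
  qed
qed

lemma mul_Rm: "INmul (Rm p D) (Rm q E) = Rm (p \<circ> q) {x \<in> D. x \<circ> p \<in> E}"
  unfolding INmul_def Rm_def map_comp_def by (auto simp: fun_eq_iff o_assoc)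

lemma cof_mul:
  assumes p: "p permutes {1..n}" and D: "D \<subseteq> INpts n" "finite (INpts n - D)" and E: "finite (INpts n - E)"
  shows "{x \<in> D. x \<circ> p \<in> E} \<subseteq> INpts n" "finite (INpts n - {x \<in> D. x \<circ> p \<in> E})"
proof -
  show "{x \<in> D. x \<circ> p \<in> E} \<subseteq> INpts n" using D by auto
  have ip: "Hilbert_Choice.inv p permutes {1..n}" using permutes_inv[OF p] .
  have "INpts n - {x \<in> D. x \<circ> p \<in> E} \<subseteq> (INpts n - D) \<union> (\<lambda>y. y \<circ> Hilbert_Choice.inv p) ` (INpts n - E)"
  proof
    fix x assume x: "x \<in> INpts n - {x \<in> D. x \<circ> p \<in> E}"
    show "x \<in> (INpts n - D) \<union> (\<lambda>y. y \<circ> Hilbert_Choice.inv p) ` (INpts n - E)"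
    proof (cases "x \<in> D")
      case True
      hence "x \<circ> p \<notin> E" using x by auto
      moreover have "x \<circ> p \<in> INpts n" using perm_pt[OF p] x by auto
      moreover have "x = (x \<circ> p) \<circ> Hilbert_Choice.inv p"
        using permutes_inv_o(1)[OF p] by (simp add: o_assoc[symmetric])
      ultimately show ?thesis by blast
    qed (use x in auto)
  qed
  thus "finite (INpts n - {x \<in> D. x \<circ> p \<in> E})" using D(2) E by (meson finite_Un finite_imageI finite_subset)
qed

lemma INinf_parts:
  assumes "\<alpha> \<in> INinf n" shows "dom \<alpha> \<subseteq> INpts n" "finite (INpts n - dom \<alpha>)" "ran \<alpha> \<subseteq> INpts n" "finite (INpts n - ran \<alpha>)"
  using assms unfolding INinf_def by auto

lemma mul_in:
  assumes n2: "n \<ge> 2" and a: "\<alpha> \<in> INinf n" and b: "\<beta> \<in> INinf n"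
  shows "INmul \<alpha> \<beta> \<in> INinf n" "Pm n (INmul \<alpha> \<beta>) = Pm n \<alpha> \<circ> Pm n \<beta>"
proof -
  note A = Pm_prop[OF n2 a] and B = Pm_prop[OF n2 b]
  let ?p = "Pm n \<alpha>" and ?q = "Pm n \<beta>"
  have e: "INmul \<alpha> \<beta> = Rm (?p \<circ> ?q) {x \<in> dom \<alpha>. x \<circ> ?p \<in> dom \<beta>}"
    using A B mul_Rm by metis
  have pq: "?p \<circ> ?q permutes {1..n}" using A B permutes_compose by blast
  note c = cof_mul[OF conjunct1[OF A] INinf_parts(1,2)[OF a] INinf_parts(2)[OF b]]
  show "INmul \<alpha> \<beta> \<in> INinf n" unfolding e by (rule Rm_in[OF pq c])
  show "Pm n (INmul \<alpha> \<beta>) = ?p \<circ> ?q" unfolding e by (rule Pm_Rm[OF n2 pq c])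
qed

lemma ran_char:
  assumes n2: "n \<ge> 2" and a: "\<alpha> \<in> INinf n" and x: "x \<in> INpts n"
  shows "x \<circ> Pm n \<alpha> \<in> ran \<alpha> \<longleftrightarrow> x \<in> dom \<alpha>"
proof -
  note A = Pm_prop[OF n2 a]
  have "ran \<alpha> = (\<lambda>x. x \<circ> Pm n \<alpha>) ` dom \<alpha>" using A ran_Rm by metis
  thus ?thesis using comp_perm_inj[OF conjunct1[OF A]] by auto
qed

lemma INid_Rm: "INid n = Rm id (INpts n)"
  unfolding INid_def Rm_def by auto

lemma INid_in: "INid n \<in> INinf n"
  unfolding INid_Rm by (rule Rm_in) auto

lemma Pm_INid: "n \<ge> 2 \<Longrightarrow> Pm n (INid n) = id"
  unfolding INid_Rm by (rule Pm_Rm) auto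

lemma idem_Pm:
  assumes n2: "n \<ge> 2" and e: "e \<in> INidem n" shows "Pm n e = id"
proof -
  have ei: "e \<in> INinf n" and ee: "INmul e e = e" using e unfolding INidem_def by auto
  have p: "Pm n e permutes {1..n}" using Pm_prop[OF n2 ei] by auto
  have "Pm n e \<circ> Pm n e = Pm n e" using mul_in(2)[OF n2 ei ei] ee by simp
  hence "Pm n e \<circ> Pm n e \<circ> Hilbert_Choice.inv (Pm n e) = Pm n e \<circ> Hilbert_Choice.inv (Pm n e)" by simp
  thus ?thesis using permutes_inv_o(1)[OF p] by (simp add: o_assoc[symmetric])
qed

lemma Rm_id_idem:
  assumes "E \<subseteq> INpts n" "finite (INpts n - E)" shows "Rm id E \<in> INidem n"
  unfolding INidem_def using Rm_in[OF permutes_id assms] by (simp add: mul_Rm)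

lemma unit_char:
  assumes n2: "n \<ge> 2"
  shows "u \<in> INunits n \<longleftrightarrow> (\<exists>p. p permutes {1..n} \<and> u = Rm p (INpts n))"
proof
  assume u: "u \<in> INunits n"
  then obtain v where ui: "u \<in> INinf n" and "INmul u v = INid n" unfolding INunits_def by auto
  hence "dom (v \<circ>\<^sub>m u) = INpts n" unfolding INmul_def INid_def by (auto simp: dom_def)
  hence "INpts n \<subseteq> dom u" by (auto simp: dom_def map_comp_def split: option.splits)
  hence "dom u = INpts n" using INinf_parts(1)[OF ui] by auto
  thus "\<exists>p. p permutes {1..n} \<and> u = Rm p (INpts n)" using Pm_prop[OF n2 ui] by metis
next
  assume "\<exists>p. p permutes {1..n} \<and> u = Rm p (INpts n)"
  then obtain p where p: "p permutes {1..n}" and u: "u = Rm p (INpts n)" by blast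
  have ip: "Hilbert_Choice.inv p permutes {1..n}" using permutes_inv[OF p] .
  have s1: "{x \<in> INpts n. x \<circ> p \<in> INpts n} = INpts n" using perm_pt[OF p] by auto
  have s2: "{x \<in> INpts n. x \<circ> Hilbert_Choice.inv p \<in> INpts n} = INpts n" using perm_pt[OF ip] by auto
  have "INmul u (Rm (Hilbert_Choice.inv p) (INpts n)) = INid n"
    unfolding u mul_Rm s1 INid_Rm permutes_inv_o(1)[OF p] ..
  moreover have "INmul (Rm (Hilbert_Choice.inv p) (INpts n)) u = INid n"
    unfolding u mul_Rm s2 INid_Rm permutes_inv_o(2)[OF p] ..
  moreover have "u \<in> INinf n" "Rm (Hilbert_Choice.inv p) (INpts n) \<in> INinf n"
    using Rm_in[OF p] Rm_in[OF ip] u by auto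
  ultimately show "u \<in> INunits n" unfolding INunits_def by blast
qed

lemma decomp:
  assumes n2: "n \<ge> 2" and a: "\<alpha> \<in> INinf n"
  shows "Rm (Pm n \<alpha>) (INpts n) \<in> INunits n" "\<exists>e\<in>INidem n. \<alpha> = INmul (Rm (Pm n \<alpha>) (INpts n)) e"
proof -
  note A = Pm_prop[OF n2 a]
  show "Rm (Pm n \<alpha>) (INpts n) \<in> INunits n" using unit_char[OF n2] A by blast
  have eI: "Rm id (ran \<alpha>) \<in> INidem n" by (rule Rm_id_idem) (use INinf_parts[OF a] in auto)
  have "{x \<in> INpts n. x \<circ> Pm n \<alpha> \<in> ran \<alpha>} = dom \<alpha>" using ran_char[OF n2 a] INinf_parts(1)[OF a] by auto
  hence "INmul (Rm (Pm n \<alpha>) (INpts n)) (Rm id (ran \<alpha>)) = \<alpha>" using A by (simp add: mul_Rm)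
  thus "\<exists>e\<in>INidem n. \<alpha> = INmul (Rm (Pm n \<alpha>) (INpts n)) e" using eI by metis
qed

lemma decomp_uniq:
  assumes n2: "n \<ge> 2" and u: "u \<in> INunits n" and e: "e \<in> INidem n" and a: "\<alpha> = INmul u e"
  shows "u = Rm (Pm n \<alpha>) (INpts n)"
proof -
  obtain q where q: "q permutes {1..n}" "u = Rm q (INpts n)" using u unit_char[OF n2] by blast
  have ui: "u \<in> INinf n" using u unfolding INunits_def by auto
  have ei: "e \<in> INinf n" using e unfolding INidem_def by auto
  have "Pm n \<alpha> = Pm n u \<circ> Pm n e" using mul_in(2)[OF n2 ui ei] a by simp
  also have "\<dots> = q" using idem_Pm[OF n2 e] Pm_Rm[OF n2 q(1), of "INpts n"] q(2) by simp
  finally show ?thesis using q by simp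
qed

lemma sigma_eq:
  assumes n2: "n \<ge> 2" and a: "\<alpha> \<in> INinf n"
  shows "INsigma n \<alpha> = Rm (Pm n \<alpha>) (INpts n)"
  unfolding INsigma_def
  by (rule the1_equality) (use decomp[OF n2 a] decomp_uniq[OF n2] in blast)+

lemma Cmg_char:
  assumes n2: "n \<ge> 2" and a: "\<alpha> \<in> INinf n" and b: "\<beta> \<in> INinf n"
  shows "(\<alpha>, \<beta>) \<in> Cmg n \<longleftrightarrow> Pm n \<alpha> = Pm n \<beta>"
proof
  assume "(\<alpha>, \<beta>) \<in> Cmg n"
  then obtain e where e: "e \<in> INidem n" "INmul \<alpha> e = INmul \<beta> e" unfolding Cmg_def by auto
  have ei: "e \<in> INinf n" using e unfolding INidem_def by auto
  show "Pm n \<alpha> = Pm n \<beta>" using mul_in(2)[OF n2 a ei] mul_in(2)[OF n2 b ei] e idem_Pm[OF n2 e(1)] by simp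
next
  assume eq: "Pm n \<alpha> = Pm n \<beta>"
  define E where "E = ran \<alpha> \<inter> ran \<beta>"
  have "INpts n - E = (INpts n - ran \<alpha>) \<union> (INpts n - ran \<beta>)" unfolding E_def by auto
  hence eI: "Rm id E \<in> INidem n" by (intro Rm_id_idem) (use INinf_parts[OF a] INinf_parts[OF b] in \<open>auto simp: E_def\<close>)
  note A = Pm_prop[OF n2 a] and B = Pm_prop[OF n2 b]
  have s1: "{x \<in> dom \<alpha>. x \<circ> Pm n \<alpha> \<in> E} = dom \<alpha> \<inter> dom \<beta>"
    using ran_char[OF n2 a] ran_char[OF n2 b] INinf_parts(1)[OF a] INinf_parts(1)[OF b] eq
    unfolding E_def by auto
  have s2: "{x \<in> dom \<beta>. x \<circ> Pm n \<beta> \<in> E} = dom \<alpha> \<inter> dom \<beta>"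
    using ran_char[OF n2 a] ran_char[OF n2 b] INinf_parts(1)[OF a] INinf_parts(1)[OF b] eq
    unfolding E_def by auto
  have "INmul \<alpha> (Rm id E) = INmul \<beta> (Rm id E)"
  proof -
    have "INmul \<alpha> (Rm id E) = Rm (Pm n \<alpha> \<circ> id) (dom \<alpha> \<inter> dom \<beta>)"
      using A mul_Rm[of "Pm n \<alpha>" "dom \<alpha>" id E] s1 by metis
    moreover have "INmul \<beta> (Rm id E) = Rm (Pm n \<beta> \<circ> id) (dom \<alpha> \<inter> dom \<beta>)"
      using B mul_Rm[of "Pm n \<beta>" "dom \<beta>" id E] s2 by metis
    ultimately show ?thesis using eq by simp
  qed
  thus "(\<alpha>, \<beta>) \<in> Cmg n" unfolding Cmg_def using a b eI by blast
qed

lemma class_eq: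
  assumes n2: "n \<ge> 2" and a: "\<alpha> \<in> INinf n"
  shows "Cmg n `` {\<alpha>} = Cl n (Pm n \<alpha>)"
proof -
  have "\<beta> \<in> Cmg n `` {\<alpha>} \<longleftrightarrow> \<beta> \<in> INinf n \<and> (\<alpha>, \<beta>) \<in> Cmg n" for \<beta> by (auto simp: Cmg_def)
  moreover have "\<beta> \<in> INinf n \<and> (\<alpha>, \<beta>) \<in> Cmg n \<longleftrightarrow> \<beta> \<in> Cl n (Pm n \<alpha>)" for \<beta>
    using Cmg_char[OF n2 a, of \<beta>] unfolding Cl_def by auto
  ultimately show ?thesis by blast
qed

lemma Cl_mem:
  assumes n2: "n \<ge> 2" and p: "p permutes {1..n}" shows "Rm p (INpts n) \<in> Cl n p"
  unfolding Cl_def using Rm_in[OF p] Pm_Rm[OF n2 p] by auto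

lemma Cl_some:
  assumes n2: "n \<ge> 2" and p: "p permutes {1..n}" shows "(SOME x. x \<in> Cl n p) \<in> Cl n p"
  by (rule someI[of "\<lambda>x. x \<in> Cl n p", OF Cl_mem[OF n2 p]])

lemma Cl_inj:
  assumes n2: "n \<ge> 2" and p: "p permutes {1..n}" and e: "Cl n p = Cl n q" shows "p = q"
  using Cl_mem[OF n2 p] e unfolding Cl_def by auto

lemma quot_carrier:
  assumes n2: "n \<ge> 2" shows "carrier (INquot n) = Cl n ` {p. p permutes {1..n}}"
proof -
  have "INinf n // Cmg n = Cl n ` {p. p permutes {1..n}}"
  proof
    show "INinf n // Cmg n \<subseteq> Cl n ` {p. p permutes {1..n}}"
      unfolding quotient_def using class_eq[OF n2] Pm_prop[OF n2] by blast
    show "Cl n ` {p. p permutes {1..n}} \<subseteq> INinf n // Cmg n"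
    proof
      fix X assume "X \<in> Cl n ` {p. p permutes {1..n}}"
      then obtain p where p: "p permutes {1..n}" "X = Cl n p" by blast
      have r: "Rm p (INpts n) \<in> INinf n" using Cl_mem[OF n2 p(1)] unfolding Cl_def by auto
      have "X = Cmg n `` {Rm p (INpts n)}" using class_eq[OF n2 r] Pm_Rm[OF n2 p(1)] p(2) by simp
      thus "X \<in> INinf n // Cmg n" using r unfolding quotient_def by blast
    qed
  qed
  thus ?thesis unfolding INquot_def by simp
qed

lemma quot_mult:
  assumes n2: "n \<ge> 2" and p: "p permutes {1..n}" and q: "q permutes {1..n}"
  shows "mult (INquot n) (Cl n p) (Cl n q) = Cl n (p \<circ> q)"
proof -
  define x where "x = (SOME x. x \<in> Cl n p)"
  define y where "y = (SOME y. y \<in> Cl n q)"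
  have x: "x \<in> INinf n" "Pm n x = p" using Cl_some[OF n2 p] unfolding x_def Cl_def by auto
  have y: "y \<in> INinf n" "Pm n y = q" using Cl_some[OF n2 q] unfolding y_def Cl_def by auto
  have "mult (INquot n) (Cl n p) (Cl n q) = Cmg n `` {INmul x y}" unfolding INquot_def x_def y_def by simp
  also have "\<dots> = Cl n (p \<circ> q)" using class_eq[OF n2 mul_in(1)[OF n2 x(1) y(1)]] mul_in(2)[OF n2 x(1) y(1)] x y by simp
  finally show ?thesis .
qed

lemma quot_one:
  assumes n2: "n \<ge> 2" shows "one (INquot n) = Cl n id"
  unfolding INquot_def using class_eq[OF n2 INid_in] Pm_INid[OF n2] by simp

lemma Pm_some_Cl:
  assumes n2: "n \<ge> 2" and p: "p permutes {1..n}" shows "Pm n (SOME x. x \<in> Cl n p) = p"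
  using Cl_some[OF n2 p] unfolding Cl_def by auto

theorem theorem3p7:
  fixes n :: nat
  assumes "n \<ge> 2"
  shows "(\<forall>\<alpha>\<in>INinf n. \<exists>!u. u \<in> INunits n \<and> (\<exists>e\<in>INidem n. \<alpha> = INmul u e))
    \<and> (\<forall>\<alpha>\<in>INinf n. \<forall>\<beta>\<in>INinf n. (\<alpha>, \<beta>) \<in> Cmg n \<longleftrightarrow> INsigma n \<alpha> = INsigma n \<beta>)
    \<and> group (INquot n)
    \<and> INquot n \<cong> sym_group n
    \<and> (\<exists>\<phi> \<psi>. \<phi> \<in> iso (INunits_grp n) (sym_group n)
          \<and> \<psi> \<in> iso (INquot n) (sym_group n)
          \<and> (\<forall>\<alpha>\<in>INinf n. \<psi> (Cmg n `` {\<alpha>}) = \<phi> (INsigma n \<alpha>)))"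
proof -
  note n2 = assms
  have P1: "\<forall>\<alpha>\<in>INinf n. \<exists>!u. u \<in> INunits n \<and> (\<exists>e\<in>INidem n. \<alpha> = INmul u e)"
    using decomp[OF n2] decomp_uniq[OF n2] by blast
  have sig: "INsigma n \<alpha> = INsigma n \<beta> \<longleftrightarrow> Pm n \<alpha> = Pm n \<beta>" if a: "\<alpha> \<in> INinf n" and b: "\<beta> \<in> INinf n" for \<alpha> \<beta>
  proof
    assume "INsigma n \<alpha> = INsigma n \<beta>"
    hence "Pm n (Rm (Pm n \<alpha>) (INpts n)) = Pm n (Rm (Pm n \<beta>) (INpts n))" using sigma_eq[OF n2 a] sigma_eq[OF n2 b] by simp
    thus "Pm n \<alpha> = Pm n \<beta>" using Pm_Rm[OF n2 conjunct1[OF Pm_prop[OF n2 a]], of "INpts n"]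
        Pm_Rm[OF n2 conjunct1[OF Pm_prop[OF n2 b]], of "INpts n"] by simp
  qed (simp add: sigma_eq[OF n2 a] sigma_eq[OF n2 b])
  have P2: "\<forall>\<alpha>\<in>INinf n. \<forall>\<beta>\<in>INinf n. (\<alpha>, \<beta>) \<in> Cmg n \<longleftrightarrow> INsigma n \<alpha> = INsigma n \<beta>"
    using Cmg_char[OF n2] sig by blast
  have carr: "\<exists>p. p permutes {1..n} \<and> X = Cl n p" if "X \<in> carrier (INquot n)" for X
    using that quot_carrier[OF n2] by auto
  have carrI: "p permutes {1..n} \<Longrightarrow> Cl n p \<in> carrier (INquot n)" for p
    using quot_carrier[OF n2] by auto
  have grp: "group (INquot n)"
  proof (rule groupI)
    fix x y assume "x \<in> carrier (INquot n)" "y \<in> carrier (INquot n)"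
    then obtain p q where "p permutes {1..n}" "x = Cl n p" "q permutes {1..n}" "y = Cl n q" using carr by metis
    thus "x \<otimes>\<^bsub>INquot n\<^esub> y \<in> carrier (INquot n)" using quot_mult[OF n2] carrI permutes_compose by metis
  next
    show "\<one>\<^bsub>INquot n\<^esub> \<in> carrier (INquot n)" using quot_one[OF n2] carrI[OF permutes_id] by simp
  next
    fix x y z assume "x \<in> carrier (INquot n)" "y \<in> carrier (INquot n)" "z \<in> carrier (INquot n)"
    then obtain p q r where pqr: "p permutes {1..n}" "x = Cl n p" "q permutes {1..n}" "y = Cl n q"
      "r permutes {1..n}" "z = Cl n r" using carr by metis
    have pq: "p \<circ> q permutes {1..n}" "q \<circ> r permutes {1..n}" using pqr permutes_compose by blast+
    show "x \<otimes>\<^bsub>INquot n\<^esub> y \<otimes>\<^bsub>INquot n\<^esub> z = x \<otimes>\<^bsub>INquot n\<^esub> (y \<otimes>\<^bsub>INquot n\<^esub> z)"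
      using pqr pq by (simp add: quot_mult[OF n2] o_assoc)
  next
    fix x assume "x \<in> carrier (INquot n)"
    then obtain p where p: "p permutes {1..n}" "x = Cl n p" using carr by metis
    show "\<one>\<^bsub>INquot n\<^esub> \<otimes>\<^bsub>INquot n\<^esub> x = x" using p by (simp add: quot_one[OF n2] quot_mult[OF n2])
  next
    fix x assume "x \<in> carrier (INquot n)"
    then obtain p where p: "p permutes {1..n}" "x = Cl n p" using carr by metis
    have ip: "Hilbert_Choice.inv p permutes {1..n}" using permutes_inv[OF p(1)] .
    have "Cl n (Hilbert_Choice.inv p) \<otimes>\<^bsub>INquot n\<^esub> x = \<one>\<^bsub>INquot n\<^esub>"
      using p ip by (simp add: quot_one[OF n2] quot_mult[OF n2] permutes_inv_o(2)[OF p(1)])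
    thus "\<exists>y\<in>carrier (INquot n). y \<otimes>\<^bsub>INquot n\<^esub> x = \<one>\<^bsub>INquot n\<^esub>" using carrI[OF ip] by blast
  qed
  define \<psi> where "\<psi> X = Pm n (SOME x. x \<in> X)" for X
  have \<psi>C: "p permutes {1..n} \<Longrightarrow> \<psi> (Cl n p) = p" for p unfolding \<psi>_def by (rule Pm_some_Cl[OF n2])
  have iso1: "\<psi> \<in> iso (INquot n) (sym_group n)"
  proof -
    have hom: "\<psi> \<in> hom (INquot n) (sym_group n)"
    proof (rule homI)
      fix x assume "x \<in> carrier (INquot n)"
      then obtain p where "p permutes {1..n}" "x = Cl n p" using carr by metis
      thus "\<psi> x \<in> carrier (sym_group n)" using \<psi>C by (simp add: sym_group_def)
    next
      fix x y assume "x \<in> carrier (INquot n)" "y \<in> carrier (INquot n)"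
      then obtain p q where pq: "p permutes {1..n}" "x = Cl n p" "q permutes {1..n}" "y = Cl n q" using carr by metis
      have "p \<circ> q permutes {1..n}" using pq permutes_compose by blast
      thus "\<psi> (x \<otimes>\<^bsub>INquot n\<^esub> y) = \<psi> x \<otimes>\<^bsub>sym_group n\<^esub> \<psi> y"
        using pq by (simp add: quot_mult[OF n2] \<psi>C sym_group_def)
    qed
    have "bij_betw \<psi> (carrier (INquot n)) (carrier (sym_group n))"
    proof (rule bij_betw_imageI)
      show "inj_on \<psi> (carrier (INquot n))"
      proof (rule inj_onI)
        fix x y assume "x \<in> carrier (INquot n)" "y \<in> carrier (INquot n)" "\<psi> x = \<psi> y"
        thus "x = y" using carr \<psi>C by metis
      qed
      show "\<psi> ` carrier (INquot n) = carrier (sym_group n)"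
        unfolding quot_carrier[OF n2] using \<psi>C by (auto simp: sym_group_def image_iff)
    qed
    thus ?thesis using hom unfolding iso_def by blast
  qed
  have ucar: "carrier (INunits_grp n) = (\<lambda>p. Rm p (INpts n)) ` {p. p permutes {1..n}}"
    unfolding INunits_grp_def using unit_char[OF n2] by auto
  have PmR: "p permutes {1..n} \<Longrightarrow> Pm n (Rm p (INpts n)) = p" for p by (rule Pm_Rm[OF n2]) auto
  have iso2: "Pm n \<in> iso (INunits_grp n) (sym_group n)"
  proof -
    have hom: "Pm n \<in> hom (INunits_grp n) (sym_group n)"
    proof (rule homI)
      fix x assume "x \<in> carrier (INunits_grp n)"
      then obtain p where "p permutes {1..n}" "x = Rm p (INpts n)" using ucar by auto
      thus "Pm n x \<in> carrier (sym_group n)" using PmR by (simp add: sym_group_def)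
    next
      fix x y assume "x \<in> carrier (INunits_grp n)" "y \<in> carrier (INunits_grp n)"
      hence "x \<in> INinf n" "y \<in> INinf n" unfolding INunits_grp_def INunits_def by auto
      thus "Pm n (x \<otimes>\<^bsub>INunits_grp n\<^esub> y) = Pm n x \<otimes>\<^bsub>sym_group n\<^esub> Pm n y"
        using mul_in(2)[OF n2] by (simp add: INunits_grp_def sym_group_def)
    qed
    have "bij_betw (Pm n) (carrier (INunits_grp n)) (carrier (sym_group n))"
    proof (rule bij_betw_imageI)
      show "inj_on (Pm n) (carrier (INunits_grp n))"
        unfolding ucar by (rule inj_onI) (auto simp: PmR)
      show "Pm n ` carrier (INunits_grp n) = carrier (sym_group n)"
        unfolding ucar using PmR by (auto simp: sym_group_def image_iff)
    qed
    thus ?thesis using hom unfolding iso_def by blast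
  qed
  have compat: "\<forall>\<alpha>\<in>INinf n. \<psi> (Cmg n `` {\<alpha>}) = Pm n (INsigma n \<alpha>)"
  proof
    fix \<alpha> assume a: "\<alpha> \<in> INinf n"
    have p: "Pm n \<alpha> permutes {1..n}" using Pm_prop[OF n2 a] by auto
    show "\<psi> (Cmg n `` {\<alpha>}) = Pm n (INsigma n \<alpha>)"
      using class_eq[OF n2 a] \<psi>C[OF p] sigma_eq[OF n2 a] PmR[OF p] by simp
  qed
  have "INquot n \<cong> sym_group n" using iso1 unfolding is_iso_def by blast
  thus ?thesis using P1 P2 grp iso1 iso2 compat by blast
qed

end
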